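(* Let $(K,\mathbb D)$ be an $F[m]$-field for the group law $F$ of the context. Let $0\le n\le m-1$ and $i,j<p^{n+1}$ with $(i,j)\neq(0,0)$. Then $F_n\subseteq\ker D_{(i,j)}$.
   Context: $k$ is a perfect field of characteristic $p>0$, $m\in\mathbb N_{>0}$. For $1\le i\le p-1$ let $\lambda_i\in\mathbb F_p$ be the image of $\frac1p\binom pi$, and $H_n(X_2,Y_2):=\sum_{i=1}^{p-1}\lambda_iX_2^{ip^n}Y_2^{(p-i)p^n}$. Fix $M\in\mathbb N$, $\alpha_0,\dots,\alpha_M\in k$, and let $F(X_1,X_2,Y_1,Y_2):=\big(X_1+Y_1+\sum_{n=0}^M\alpha_nH_n(X_2,Y_2),\ X_2+Y_2\big)$. Let $v_1,v_2,w_1,w_2$ be $m$-truncated variables ($k[\bar v,\bar w]=k[X_1,X_2,Y_1,Y_2]/(X_i^{p^m},Y_i^{p^m})$), $F[m]$ the image of $F$. An $F[m]$-field is a field $K\supseteq k$ with a family $(D_{(i,j)}:K\to K)_{0\le i,j<p^m}$, $D_{(0,0)}=\mathrm{id}$, such that $r\mapsto\sum D_{(i,j)}(r)v_1^iv_2^j$ is a $k$-algebra homomorphism $K\to K[v_1,v_2]$ and $\sum D_{(j_1,j_2)}(D_{(i_1,i_2)}(r))v_1^{i_1}v_2^{i_2}w_1^{j_1}w_2^{j_2}=\sum D_{(i_1,i_2)}(r)F[m]_1^{i_1}F[m]_2^{i_2}$ for all $r$. For $0\le s\le m-1$, $F_s:=\bigcap_{j=0}^s\big(\ker D_{(p^j,0)}\cap\ker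 D_{(0,p^j)}\big)$. *)

theory Defs
  imports Main "HOL-Computational_Algebra.Primes"
begin

text \<open>Elements of the m-truncated polynomial ring K[v1,v2,w1,w2] = K[X1,X2,Y1,Y2]/(X_i^q, Y_i^q),
  q = p^m, represented by their coefficient functions on exponent tuples (a1,a2,b1,b2)
  (exponents of v1, v2, w1, w2); coefficients with some exponent \<ge> q are 0.\<close>

type_synonym 'a tpoly = "nat \<times> nat \<times> nat \<times> nat \<Rightarrow> 'a"

definition tmono :: "nat \<Rightarrow> 'a::zero \<Rightarrow> nat \<times> nat \<times> nat \<times> nat \<Rightarrow> 'a tpoly" where
  "tmono q c e = (\<lambda>(a1,a2,b1,b2).
     if (a1,a2,b1,b2) = e \<and> a1 < q \<and> a2 < q \<and> b1 < q \<and> b2 < q then c else 0)"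

definition tone :: "nat \<Rightarrow> 'a::{zero,one} tpoly" where
  "tone q = tmono q 1 (0,0,0,0)"

definition tmul :: "nat \<Rightarrow> 'a::comm_ring_1 tpoly \<Rightarrow> 'a tpoly \<Rightarrow> 'a tpoly" where
  "tmul q f g = (\<lambda>(a1,a2,b1,b2).
     if a1 < q \<and> a2 < q \<and> b1 < q \<and> b2 < q then
       (\<Sum>c1\<le>a1. \<Sum>c2\<le>a2. \<Sum>d1\<le>b1. \<Sum>d2\<le>b2.
          f (c1,c2,d1,d2) * g (a1-c1, a2-c2, b1-d1, b2-d2))
     else 0)"

definition tpow :: "nat \<Rightarrow> 'a::comm_ring_1 tpoly \<Rightarrow> nat \<Rightarrow> 'a tpoly" where
  "tpow q f n = (tmul q f ^^ n) (tone q)"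

definition lam :: "nat \<Rightarrow> nat \<Rightarrow> 'a::comm_ring_1" where
  "lam p i = of_nat ((p choose i) div p)"

definition Fm1 :: "nat \<Rightarrow> nat \<Rightarrow> nat \<Rightarrow> (nat \<Rightarrow> 'a::comm_ring_1) \<Rightarrow> 'a tpoly" where
  "Fm1 p m M alpha = (\<lambda>x. tmono (p^m) 1 (1,0,0,0) x + tmono (p^m) 1 (0,0,1,0) x
      + (\<Sum>n\<le>M. \<Sum>i\<in>{1..p-1}.
           tmono (p^m) (alpha n * lam p i) (0, i * p^n, 0, (p - i) * p^n) x))"

definition Fm2 :: "nat \<Rightarrow> nat \<Rightarrow> 'a::comm_ring_1 tpoly" where
  "Fm2 p m = (\<lambda>x. tmono (p^m) 1 (0,1,0,0) x + tmono (p^m) 1 (0,0,0,1) x)"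

definition Fm_field ::
  "nat \<Rightarrow> nat \<Rightarrow> 'a::field set \<Rightarrow> nat \<Rightarrow> (nat \<Rightarrow> 'a) \<Rightarrow> (nat \<times> nat \<Rightarrow> 'a \<Rightarrow> 'a) \<Rightarrow> bool" where
  "Fm_field p m kk M alpha D \<longleftrightarrow>
     D (0,0) = id
   \<and> (\<forall>i<p^m. \<forall>j<p^m. \<forall>r s. D (i,j) (r + s) = D (i,j) r + D (i,j) s)
   \<and> (\<forall>i<p^m. \<forall>j<p^m. \<forall>r s. D (i,j) (r * s) =
        (\<Sum>a\<le>i. \<Sum>b\<le>j. D (a,b) r * D (i-a, j-b) s))
   \<and> (\<forall>i<p^m. \<forall>j<p^m. D (i,j) 1 = (if (i,j) = (0,0) then 1 else 0))
   \<and> (\<forall>i<p^m. \<forall>j<p^m. \<forall>c\<in>kk. D (i,j) c = (if (i,j) = (0,0) then c else 0))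
   \<and> (\<forall>r i1 i2 j1 j2. i1 < p^m \<longrightarrow> i2 < p^m \<longrightarrow> j1 < p^m \<longrightarrow> j2 < p^m \<longrightarrow>
        D (j1,j2) (D (i1,i2) r) =
        (\<Sum>a1<p^m. \<Sum>a2<p^m. D (a1,a2) r *
           tmul (p^m) (tpow (p^m) (Fm1 p m M alpha) a1) (tpow (p^m) (Fm2 p m) a2) (i1,i2,j1,j2)))"

definition Fs :: "nat \<Rightarrow> (nat \<times> nat \<Rightarrow> 'a::zero \<Rightarrow> 'a) \<Rightarrow> nat \<Rightarrow> 'a set" where
  "Fs p D s = {r. \<forall>j\<le>s. D (p^j, 0) r = 0 \<and> D (0, p^j) r = 0}"

definition perfect_subfield :: "nat \<Rightarrow> 'a::field set \<Rightarrow> bool" where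
  "perfect_subfield p kk \<longleftrightarrow> 0 \<in> kk \<and> 1 \<in> kk
     \<and> (\<forall>x\<in>kk. \<forall>y\<in>kk. x + y \<in> kk \<and> x * y \<in> kk \<and> - x \<in> kk \<and> inverse x \<in> kk)
     \<and> (\<forall>x\<in>kk. \<exists>y\<in>kk. y ^ p = x)"

end

theory Submission imports Defs "HOL-Computational_Algebra.Polynomial"
begin

lemma sum_if_const: "(\<Sum>k\<in>S. if P then f k else 0) = (if P then (\<Sum>k\<in>S. f k) else 0)"
  by simp

lemma tmul_mono_left:
  "tmul q (tmono q c (e1,e2,e3,e4)) g (a1,a2,b1,b2) =
   (if a1<q \<and> a2<q \<and> b1<q \<and> b2<q \<and> e1\<le>a1 \<and> e2\<le>a2 \<and> e3\<le>b1 \<and> e4\<le>b2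
    then c * g (a1-e1,a2-e2,b1-e3,b2-e4) else 0)"
proof -
  have *: "(if (c1,c2,d1,d2) = (e1,e2,e3,e4) \<and> c1<q \<and> c2<q \<and> d1<q \<and> d2<q then c else 0) * g (a1-c1,a2-c2,b1-d1,b2-d2)
     = (if c1 = e1 then if c2 = e2 then if d1 = e3 then if d2 = e4 then
          (if e1<q \<and> e2<q \<and> e3<q \<and> e4<q then c * g (a1-e1,a2-e2,b1-e3,b2-e4) else 0) else 0 else 0 else 0 else 0)"
    for c1 c2 d1 d2 by auto
  show ?thesis unfolding tmul_def tmono_def
    apply (simp only: split_conv *)
    apply (simp only: sum_if_const sum.delta finite_atMost)
    by auto
qed

lemma tmul_add_left:
  "tmul q (\<lambda>x. f x + g x) h = (\<lambda>x. tmul q f h x + tmul q g h x)"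
  by (auto simp: tmul_def distrib_right sum.distrib fun_eq_iff)

lemma sum_flip: "(\<Sum>c\<le>(a::nat). f c) = (\<Sum>c\<le>a. f (a - c))"
  by (rule sum.reindex_bij_witness[of _ "\<lambda>c. a-c" "\<lambda>c. a-c"]) auto

lemma flip_lvl: "(\<And>c. c \<le> a \<Longrightarrow> P c = Q (a-c)) \<Longrightarrow> (\<Sum>c\<le>(a::nat). P c) = (\<Sum>c\<le>a. Q c)"
  by (subst sum_flip[where a=a and f=Q]) (rule sum.cong, auto)

lemma tmul_comm: "tmul q f g = tmul q g f"
proof (rule ext, clarify)
  fix a1 a2 b1 b2
  have "(\<Sum>c1\<le>a1. \<Sum>c2\<le>a2. \<Sum>d1\<le>b1. \<Sum>d2\<le>b2. f (c1,c2,d1,d2) * g (a1-c1, a2-c2, b1-d1, b2-d2))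
      = (\<Sum>c1\<le>a1. \<Sum>c2\<le>a2. \<Sum>d1\<le>b1. \<Sum>d2\<le>b2. g (c1,c2,d1,d2) * f (a1-c1, a2-c2, b1-d1, b2-d2))"
    apply (rule flip_lvl)+
    by (auto simp: mult.commute)
  then show "tmul q f g (a1,a2,b1,b2) = tmul q g f (a1,a2,b1,b2)"
    by (simp add: tmul_def)
qed

lemma binom_nz:
  assumes "prime CHAR('a::field)" and "\<not> CHAR('a) dvd u"
  shows "(of_nat ((CHAR('a)^s * u) choose (CHAR('a)^s)) :: 'a) \<noteq> 0"
proof -
  define N where "N = CHAR('a)^s"
  have N0: "N > 0" using assms(1) unfolding N_def by (simp add: prime_gt_0_nat)
  have "coeff ([:1,1:] ^ (N*u)) N = (of_nat ((N*u) choose N) :: 'a)"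
  proof (cases "N \<le> N*u")
    case True then show ?thesis by (simp add: coeff_linear_poly_power)
  next
    case False then have "N*u < N" by simp
    then show ?thesis using N0 by (simp add: coeff_eq_0 degree_linear_power binomial_eq_0)
  qed
  moreover have "[:1,1:] ^ (N*u) = (1 + monom (1::'a) N) ^ u"
  proof -
    have "[:1,1:] = 1 + monom (1::'a) 1" by (simp add: monom_altdef one_pCons)
    then have "[:1,1:] ^ N = 1 + monom (1::'a) N"
      using freshmans_dream'[where x=1 and y="monom (1::'a) 1" and m=N and n=s] assms(1) N_def
      by (simp add: monom_power)
    then show ?thesis by (simp add: power_mult)
  qed
  moreover have "coeff ((1 + monom (1::'a) N) ^ u) N = of_nat u"
  proof -
    have "(1 + monom (1::'a) N) ^ u = (\<Sum>k\<le>u. of_nat (u choose k) * monom 1 N ^ k * 1 ^ (u-k))"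
      by (subst add.commute, rule binomial_ring)
    also have "\<dots> = (\<Sum>k\<le>u. monom (of_nat (u choose k)) (N*k))"
      by (simp add: monom_power of_nat_monom mult_monom)
    finally have "coeff ((1 + monom (1::'a) N) ^ u) N = (\<Sum>k\<le>u. if N*k = N then of_nat (u choose k) else 0)"
      by (simp add: coeff_sum coeff_monom)
    also have "\<dots> = (\<Sum>k\<le>u. if k = 1 then of_nat (u choose k) else 0)"
      using N0 by (intro sum.cong) auto
    also have "\<dots> = of_nat u"
      using assms(2) by (cases u) (auto intro: Nat.gr0I)
    finally show ?thesis .
  qed
  ultimately have "(of_nat ((N*u) choose N) :: 'a) = of_nat u" by simp
  moreover have "(of_nat u :: 'a) \<noteq> 0" using assms(2) by (simp add: of_nat_eq_0_iff_char_dvd)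
  ultimately show ?thesis unfolding N_def by simp
qed

lemma tpow_0: "tpow q f 0 = tone q" by (simp add: tpow_def)
lemma tpow_Suc: "tpow q f (Suc n) = tmul q f (tpow q f n)" by (simp add: tpow_def)

lemma tpow_XY1:
  "tpow q (\<lambda>x. tmono q (1::'a::comm_ring_1) (1,0,0,0) x + tmono q 1 (0,0,1,0) x) n (a,b,c,d) =
   (if b = 0 \<and> d = 0 \<and> a + c = n \<and> a < q \<and> c < q then of_nat (n choose a) else 0)"
proof (induction n arbitrary: a b c d)
  case 0
  then show ?case by (auto simp: tpow_0 tone_def tmono_def)
next
  case (Suc n)
  show ?case
    apply (simp only: tpow_Suc tmul_add_left tmul_mono_left Suc.IH)
    apply (cases a; cases c)
    apply auto
    done
qed

lemma tpow_XY2: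
  "tpow q (\<lambda>x. tmono q (1::'a::comm_ring_1) (0,1,0,0) x + tmono q 1 (0,0,0,1) x) n (a,b,c,d) =
   (if a = 0 \<and> c = 0 \<and> b + d = n \<and> b < q \<and> d < q then of_nat (n choose b) else 0)"
proof (induction n arbitrary: a b c d)
  case 0
  then show ?case by (auto simp: tpow_0 tone_def tmono_def)
next
  case (Suc n)
  show ?case
    apply (simp only: tpow_Suc tmul_add_left tmul_mono_left Suc.IH)
    apply (cases b; cases d)
    apply auto
    done
qed

lemma tpow_Y2: "tpow q (tmono q (1::'a::comm_ring_1) (0,0,0,1)) n = tmono q 1 (0,0,0,n)"
proof (induction n)
  case 0
  then show ?case by (simp add: tpow_0 tone_def)
next
  case (Suc n)
  show ?case
    by (rule ext, clarify, simp only: tpow_Suc Suc.IH tmul_mono_left) (auto simp: tmono_def)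
qed

lemma tpow_XY1':
  "tpow q (\<lambda>x. tmono q (1::'a::comm_ring_1) (Suc 0,0,0,0) x + tmono q 1 (0,0,Suc 0,0) x) n (a,b,c,d) =
   (if b = 0 \<and> d = 0 \<and> a + c = n \<and> a < q \<and> c < q then of_nat (n choose a) else 0)"
  using tpow_XY1[where 'a='a] by simp

lemma tpow_XY2':
  "tpow q (\<lambda>x. tmono q (1::'a::comm_ring_1) (0,Suc 0,0,0) x + tmono q 1 (0,0,0,Suc 0) x) n (a,b,c,d) =
   (if a = 0 \<and> c = 0 \<and> b + d = n \<and> b < q \<and> d < q then of_nat (n choose b) else 0)"
  using tpow_XY2[where 'a='a] by simp

lemma tpow_Y2': "tpow q (tmono q (1::'a::comm_ring_1) (0,0,0,Suc 0)) n = tmono q 1 (0,0,0,n)"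
  using tpow_Y2[where 'a='a] by simp

definition R1 :: "'a::zero tpoly \<Rightarrow> 'a tpoly" where
  "R1 f = (\<lambda>(a1,a2,b1,b2). if a2 = 0 then f (a1,a2,b1,b2) else 0)"

lemma R1_tmul: "R1 (tmul q f g) = tmul q (R1 f) (R1 g)"
  by (rule ext, clarify) (auto simp: R1_def tmul_def intro!: sum.neutral)

lemma R1_tone: "R1 (tone q) = tone q"
  by (rule ext, clarify) (auto simp: R1_def tone_def tmono_def)

lemma R1_tpow: "R1 (tpow q f n) = tpow q (R1 f) n"
  by (induction n) (simp_all add: tpow_0 tpow_Suc R1_tone R1_tmul)

lemma R1_Fm1:
  assumes "p > 0"
  shows "R1 (Fm1 p m M alpha) = (\<lambda>x. tmono (p^m) (1::'a::comm_ring_1) (1,0,0,0) x + tmono (p^m) 1 (0,0,1,0) x)"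
proof (rule ext, clarify)
  fix a1 a2 b1 b2
  show "R1 (Fm1 p m M alpha) (a1,a2,b1,b2) = tmono (p^m) (1::'a) (1,0,0,0) (a1,a2,b1,b2) + tmono (p^m) 1 (0,0,1,0) (a1,a2,b1,b2)"
  proof (cases "a2 = 0")
    case True
    have "(\<Sum>n\<le>M. \<Sum>i\<in>{1..p-1}. tmono (p^m) (alpha n * lam p i) (0, i * p^n, 0, (p - i) * p^n) (a1,a2,b1,b2)) = 0"
      using True assms by (intro sum.neutral ballI) (auto simp: tmono_def)
    then show ?thesis using True by (simp add: R1_def Fm1_def)
  next
    case False
    then show ?thesis by (simp add: R1_def tmono_def)
  qed
qed

lemma R1_Fm2: "R1 (Fm2 p m) = tmono (p^m) (1::'a::comm_ring_1) (0,0,0,1)"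
  by (rule ext, clarify) (auto simp: R1_def Fm2_def tmono_def)

definition lowdeg :: "nat \<Rightarrow> 'a::zero tpoly \<Rightarrow> bool" where
  "lowdeg d f \<longleftrightarrow> (\<forall>a1 a2 b1 b2. f (a1,a2,b1,b2) \<noteq> 0 \<longrightarrow> d \<le> a1+a2+b1+b2)"

lemma lowdeg_tmul:
  assumes "lowdeg d1 f" "lowdeg d2 g"
  shows "lowdeg (d1+d2) (tmul q f g)"
  unfolding lowdeg_def
proof (intro allI impI)
  fix a1 a2 b1 b2
  assume ne: "tmul q f g (a1,a2,b1,b2) \<noteq> 0"
  show "d1 + d2 \<le> a1+a2+b1+b2"
  proof (rule ccontr)
    assume lt: "\<not> d1 + d2 \<le> a1+a2+b1+b2"
    have "tmul q f g (a1,a2,b1,b2) = 0"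
      unfolding tmul_def
    proof (simp, intro impI sum.neutral ballI)
      fix c1 c2 d1' d2'
      assume "c1 \<in> {..a1}" "c2 \<in> {..a2}" "d1' \<in> {..b1}" "d2' \<in> {..b2}"
      show "f (c1,c2,d1',d2') * g (a1-c1,a2-c2,b1-d1',b2-d2') = 0"
      proof (rule ccontr)
        assume "f (c1,c2,d1',d2') * g (a1-c1,a2-c2,b1-d1',b2-d2') \<noteq> 0"
        then have "f (c1,c2,d1',d2') \<noteq> 0" "g (a1-c1,a2-c2,b1-d1',b2-d2') \<noteq> 0" by auto
        then have "d1 \<le> c1+c2+d1'+d2'" "d2 \<le> (a1-c1)+(a2-c2)+(b1-d1')+(b2-d2')"
          using assms unfolding lowdeg_def by blast+
        with lt \<open>c1 \<in> {..a1}\<close> \<open>c2 \<in> {..a2}\<close> \<open>d1' \<in> {..b1}\<close> \<open>d2' \<in> {..b2}\<close>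
        show False by auto
      qed
    qed
    with ne show False by simp
  qed
qed

lemma lowdeg_tpow:
  assumes "lowdeg 1 f" shows "lowdeg n (tpow q f n)"
proof (induction n)
  case 0 then show ?case by (simp add: lowdeg_def)
next
  case (Suc n) then show ?case using lowdeg_tmul[OF assms Suc] by (simp add: tpow_Suc)
qed

lemma lowdeg1: "f (0,0,0,0) = 0 \<Longrightarrow> lowdeg 1 f"
  unfolding lowdeg_def by (metis One_nat_def Suc_leI add_is_0 gr0I)

lemma sum2_delta:
  assumes "a < (q::nat)" "b < q"
  shows "(\<Sum>a1<q. \<Sum>a2<q. if a1 = a \<and> a2 = b then X else 0) = X"
proof -
  have "(\<Sum>a2<q. if a1 = a \<and> a2 = b then X else 0) = (if a1 = a then X else 0)" for a1
    using assms by (cases "a1 = a") auto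
  then show ?thesis using assms by simp
qed

lemma Fm1_zero: "p > 0 \<Longrightarrow> Fm1 p m M alpha (0,0,0,0) = (0::'a::comm_ring_1)"
  unfolding Fm1_def by (auto simp: tmono_def intro!: sum.neutral)

lemma Fm2_zero: "Fm2 p m (0,0,0,0) = (0::'a::comm_ring_1)"
  unfolding Fm2_def by (auto simp: tmono_def)

theorem lemma4p4:
  fixes p m M n i j :: nat and kk :: "'a::field set" and alpha :: "nat \<Rightarrow> 'a"
    and D :: "nat \<times> nat \<Rightarrow> 'a \<Rightarrow> 'a"
  assumes "prime p" and "CHAR('a) = p"
    and "perfect_subfield p kk"
    and "m > 0"
    and "\<forall>l\<le>M. alpha l \<in> kk"
    and "Fm_field p m kk M alpha D"
    and "n \<le> m - 1"
    and "i < p ^ (n + 1)" and "j < p ^ (n + 1)" and "(i, j) \<noteq> (0, 0)"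
  shows "Fs p D n \<subseteq> {r. D (i, j) r = 0}"
proof
  fix r assume "r \<in> Fs p D n"
  then have Fr: "\<And>t. t \<le> n \<Longrightarrow> D (p^t,0) r = 0 \<and> D (0,p^t) r = 0" by (simp add: Fs_def)
  define q where "q = p^m"
  define F1 where "F1 = Fm1 p m M alpha"
  define F2 where "F2 = (Fm2 p m :: 'a tpoly)"
  have p0: "p > 0" using assms(1) by (simp add: prime_gt_0_nat)
  have p1: "p > 1" using prime_gt_1_nat[OF assms(1)] by simp
  have nm: "n + 1 \<le> m" using assms(4,7) by linarith
  have qb: "p^(n+1) \<le> q" unfolding q_def using power_increasing[OF nm, of p] p0 by linarith
  have add: "\<And>x y r s. x < q \<Longrightarrow> y < q \<Longrightarrow> D (x,y) (r + s) = D (x,y) r + D (x,y) s"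
    using assms(6)[unfolded Fm_field_def, THEN conjunct2, THEN conjunct1] unfolding q_def by blast
  have iter: "\<And>i1 i2 j1 j2. i1 < q \<Longrightarrow> i2 < q \<Longrightarrow> j1 < q \<Longrightarrow> j2 < q \<Longrightarrow>
        D (j1,j2) (D (i1,i2) r) =
        (\<Sum>a1<q. \<Sum>a2<q. D (a1,a2) r * tmul q (tpow q F1 a1) (tpow q F2 a2) (i1,i2,j1,j2))"
    using assms(6)[unfolded Fm_field_def, THEN conjunct2, THEN conjunct2, THEN conjunct2, THEN conjunct2, THEN conjunct2]
    unfolding q_def F1_def F2_def by blast
  have D0: "\<And>x y. x < q \<Longrightarrow> y < q \<Longrightarrow> D (x,y) 0 = 0"
  proof -
    fix x y assume "x < q" "y < q"
    from add[OF this, of 0 0] have "D (x,y) 0 = D (x,y) 0 + D (x,y) 0" by simp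
    then show "D (x,y) 0 = 0" using add_cancel_right_right by metis
  qed
  have decomp: "\<exists>s u. x = p^s*u \<and> \<not> p dvd u \<and> s \<le> n \<and> 0 < u" if "0 < x" "x < p^(n+1)" for x
  proof -
    have xn: "x \<noteq> 0" and nu: "\<not> is_unit p" using that p1 by auto
    obtain u where u: "x = p ^ multiplicity p x * u" "\<not> p dvd u"
      by (rule multiplicity_decompose'[OF xn nu])
    have "u \<noteq> 0"
    proof
      assume "u = 0" with u(1) that(1) show False by simp
    qed
    define k where "k = multiplicity p x"
    have ku: "x = p^k * u" using u(1) unfolding k_def .
    have "p^k * 1 \<le> p^k * u" using \<open>u \<noteq> 0\<close> by (intro mult_le_mono2) simp
    then have "p^k \<le> x" using ku by simp
    then have "p^k < p^(n+1)" using that(2) by linarith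
    then have "k < n+1" by (rule power_less_imp_less_exp[OF p1])
    then have "k \<le> n" by simp
    then show ?thesis using ku u(2) \<open>u \<noteq> 0\<close> by (intro exI[of _ k] exI[of _ u]) simp
  qed
  have bnz: "(of_nat ((p^s*u) choose (p^s)) :: 'a) \<noteq> 0" if "\<not> p dvd u" for s u
    using binom_nz[where 'a='a and u=u and s=s] assms(1,2) that by simp
  have lowF: "lowdeg (a1+a2) (tmul q (tpow q F1 a1) (tpow q F2 a2))" for a1 a2
  proof -
    have "lowdeg 1 F1" unfolding F1_def by (rule lowdeg1) (rule Fm1_zero[OF p0])
    moreover have "lowdeg 1 F2" unfolding F2_def by (rule lowdeg1) (rule Fm2_zero)
    ultimately show ?thesis by (intro lowdeg_tmul[of a1 _ a2] lowdeg_tpow)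
  qed
  have caseA: "D (a,b) r = 0" if ab: "0 < a" "a < p^(n+1)" "b < p^(n+1)" for a b
  proof -
    obtain s u where su: "a = p^s*u" "\<not> p dvd u" "s \<le> n" "0 < u" using decomp[OF ab(1,2)] by blast
    define a' where "a' = a - p^s"
    have ps: "p^s \<le> a" using su by simp
    have lt: "p^s < q" "a' < q" "a < q" "b < q" using ps ab qb unfolding a'_def by auto
    have C: "tmul q (tpow q F1 a1) (tpow q F2 a2) (p^s,0,a',b) =
             (if a1 = a \<and> a2 = b then of_nat (a choose p^s) else 0)" for a1 a2
    proof -
      have "tmul q (tpow q F1 a1) (tpow q F2 a2) (p^s,0,a',b) = R1 (tmul q (tpow q F1 a1) (tpow q F2 a2)) (p^s,0,a',b)"
        by (simp add: R1_def)
      also have "\<dots> = tmul q (tpow q (\<lambda>x. tmono q 1 (1,0,0,0) x + tmono q 1 (0,0,1,0) x) a1) (tmono q 1 (0,0,0,a2)) (p^s,0,a',b)"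
        by (simp add: R1_tmul R1_tpow F1_def F2_def R1_Fm1 R1_Fm2 tpow_Y2' q_def p0)
      also have "\<dots> = tmul q (tmono q 1 (0,0,0,a2)) (tpow q (\<lambda>x. tmono q 1 (1,0,0,0) x + tmono q 1 (0,0,1,0) x) a1) (p^s,0,a',b)"
        by (subst tmul_comm) (rule refl)
      also have "\<dots> = (if a1 = a \<and> a2 = b then of_nat (a choose p^s) else 0)"
        using lt ps unfolding a'_def by (auto simp: tmul_mono_left tpow_XY1 tpow_XY1')
      finally show ?thesis .
    qed
    have "0 = D (a',b) (D (p^s,0) r)" using Fr[OF su(3)] D0 lt by simp
    also have "\<dots> = (\<Sum>a1<q. \<Sum>a2<q. (if a1 = a \<and> a2 = b then D (a,b) r * of_nat (a choose p^s) else 0))"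
    proof -
      have E: "D (a1,a2) r * tmul q (tpow q F1 a1) (tpow q F2 a2) (p^s,0,a',b) =
          (if a1 = a \<and> a2 = b then D (a,b) r * of_nat (a choose p^s) else 0)" for a1 a2
        using C[of a1 a2] by simp
      show ?thesis using iter[of "p^s" 0 a' b] lt p0 by (simp only: E)
    qed
    also have "\<dots> = D (a,b) r * of_nat (a choose p^s)"
      using lt(3,4) by (rule sum2_delta)
    finally show ?thesis using bnz[OF su(2), of s] su(1) by simp
  qed
  show "r \<in> {r. D (i, j) r = 0}"
  proof (cases "i > 0")
    case True then show ?thesis using caseA assms(8,9) by simp
  next
    case False
    then have i0: "i = 0" by simp
    then have j0: "0 < j" using assms(10) by simp
    obtain s u where su: "j = p^s*u" "\<not> p dvd u" "s \<le> n" "0 < u" using decomp[OF j0 assms(9)] by blast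
    define j' where "j' = j - p^s"
    have ps: "p^s \<le> j" using su by simp
    have lt: "p^s < q" "j' < q" "j < q" using ps assms(9) qb unfolding j'_def by auto
    have T: "D (a1,a2) r * tmul q (tpow q F1 a1) (tpow q F2 a2) (0,p^s,0,j') =
             (if a1 = 0 \<and> a2 = j then D (0,j) r * of_nat (j choose p^s) else 0)" for a1 a2
    proof (cases "a1 = 0")
      case True
      have "tmul q (tpow q F1 a1) (tpow q F2 a2) (0,p^s,0,j') = tpow q F2 a2 (0,p^s,0,j')"
        using True lt by (simp add: tpow_0 tone_def tmul_mono_left)
      also have "\<dots> = (if a2 = j then of_nat (j choose p^s) else 0)"
        using lt ps unfolding F2_def Fm2_def q_def j'_def by (auto simp: tpow_XY2 tpow_XY2')
      finally show ?thesis using True by simp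
    next
      case False
      show ?thesis
      proof (cases "tmul q (tpow q F1 a1) (tpow q F2 a2) (0,p^s,0,j') = 0")
        case True then show ?thesis using False by simp
      next
        case ne: False
        have "a1 + a2 \<le> 0 + p^s + 0 + j'" using lowF[of a1 a2] ne unfolding lowdeg_def by blast
        then have "a1 + a2 \<le> j" using ps unfolding j'_def by simp
        then have "D (a1,a2) r = 0" using caseA[of a1 a2] False assms(9) by simp
        then show ?thesis using False by simp
      qed
    qed
    have "0 = D (0,j') (D (0,p^s) r)" using Fr[OF su(3)] D0 lt by simp
    also have "\<dots> = (\<Sum>a1<q. \<Sum>a2<q. (if a1 = 0 \<and> a2 = j then D (0,j) r * of_nat (j choose p^s) else 0))"
      using iter[of 0 "p^s" 0 j'] lt p0 by (simp only: T)
    also have "\<dots> = D (0,j) r * of_nat (j choose p^s)"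
      using lt p0 by (intro sum2_delta) auto
    finally show ?thesis using bnz[OF su(2), of s] su(1) i0 by simp
  qed
qed

end
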